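(* In any execution of the algorithm described in the context, for every round $r$ there is at most one binary value $b\in\{0,1\}$ for which there exist signed $\mathrm{AUX}[r](b)$ messages from at least $n-t$ different processes.
   Context: Model. There are $n$ processes $p_1,\dots,p_n$ ($i$ is the index of $p_i$) communicating over an asynchronous, reliable, point-to-point network: every pair of processes is connected by a channel, message delays are finite but unbounded, and the network does not lose, duplicate, modify or create messages. "Broadcast" means sending the message to every process (including oneself). Messages are signed with unforgeable digital signatures ($\langle m\rangle_j$ denotes message $m$ signed by $p_j$); malformed messages or messages with invalid signatures are ignored. Up to $t$ processes are Byzantine (faulty) and may behave arbitrarily and collude, but cannot forge signatures of other processes; the remaining processes are non-faulty and follow the algorithm. It is assumed that $t<n/3$. Algorithm. Messages are of the form $\mathrm{AUX}[r](v)$ with round $r\in\mathbb{N}$ and $v\in\{0,1\}$, sent as a pair $(\langle \mathrm{AUX}[r](v)\rangle_j,\mathit{proofs})$ where $\mathit{proofs}$ is a set of signed AUX messages. The predicate $\mathsf{is\_valid}(r,est,\mathit{proofs})$ is: if $r=0$ return true; if $r=1$ return true iff $\mathit{proofs}$ contains signed $\mathrm{AUX}[0](est)$ messages from $t+1$ different processes; otherwise let $b=(r-1)\bmod 2$; if $est=b$, return true iff ($r=2$ and $\mathit{proofs}$ contains signed $\mathrm{AUX}[0](b)$ from $t+1$ different processes) or ($\mathit{proofs}$ contains signed $\mathrm{AUX}[r-2](b)$ from $n-t$ different processes); if $est\neq b$, return true iff $\mathit{proofs}$ contains signed $\mathrm{AUX}[r-1](\neg b)$ from $n-t$ different processes.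 Each process $p_i$ with proposal $v_i$ keeps a round counter $r_i$, a set $\mathit{aux\_values}_i$ of signed AUX messages, and timers indexed by naturals (timers $2r$ and $2r+1$ belong to round $r$; starting an already started or expired timer does nothing). It sets $r_i:=0$, $\mathit{aux\_values}_i:=\emptyset$, broadcasts $(\langle\mathrm{AUX}[0](v_i)\rangle_i,\emptyset)$, then repeats forever: (1) $r_i:=r_i+1$; (2) if $i=r_i\bmod n$ (coordinator), run Broadcast; (3) start timer $2r_i$ and wait until it expires; (4) if $i\ne r_i\bmod n$, run Broadcast; (5) wait until $\mathit{aux\_values}_i$ contains round-$r_i$ AUX messages from $n-t$ different processes; (6) start timer $2r_i+1$ and wait until it expires; (7) with $b_i=r_i\bmod 2$, if $\mathit{aux\_values}_i$ contains $\mathrm{AUX}[r_i](b_i)$ from $n-t$ different processes, decide $b_i$ (if not yet decided). Broadcast: let $\mathit{values}_i$ be the set of $v\in\{0,1\}$ such that $\mathsf{is\_valid}(r_i,v,S)$ holds for some $S\subseteq\mathit{aux\_values}_i$; let $bv=(r_i+1)\bmod 2$; if $p_i$ received from $p_{r_i\bmod n}$ a message $(\langle\mathrm{AUX}[r_i](p)\rangle_{r_i\bmod n},\cdot)$ with $p\in\mathit{values}_i$ then $est_i:=p$, else if $bv\in\mathit{values}_i$ then $est_i:=bv$, else $est_i:=\neg bv$; choose $\mathit{proofs}\subseteq\mathit{aux\_values}_i$ with $\mathsf{is\_valid}(r_i,est_i,\mathit{proofs})$ and broadcast $(\langle\mathrm{AUX}[r_i](est_i)\rangle_i,\mathit{proofs})$.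 On receiving $(\langle\mathrm{AUX}[r_j](est_j)\rangle_j,\mathit{proofs})$: if $\mathsf{is\_valid}(r_j,est_j,\mathit{proofs})$, add the signed message and the messages of $\mathit{proofs}$ needed to satisfy the predicate to $\mathit{aux\_values}_i$ (such messages are called valid). Then let $\rho_i$ be the largest round for which $\mathit{aux\_values}_i$ contains messages from $t+1$ different processes, and set every timer with index $\le 2\rho_i$ to expired. *)

theory Defs
  imports Main
begin

text \<open>Signatures are unforgeable: in the execution model below, a signed message
  whose signer is non-faulty can only come into existence when that process
  signs it while following the algorithm.  Binary values are encoded as the
  naturals 0 and 1 (negation of b is 1 - b).\<close>

datatype sg = AUX (signer: nat) (srnd: nat) (sval: nat)

text \<open>A message on the network: (sender, destination, signed AUX message, proofs).\<close>
type_synonym msg = "nat \<times> nat \<times> sg \<times> sg set"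

definition signers :: "sg set \<Rightarrow> nat \<Rightarrow> nat \<Rightarrow> nat set" where
  "signers P r v = {j. AUX j r v \<in> P}"

definition is_valid :: "nat \<Rightarrow> nat \<Rightarrow> nat \<Rightarrow> nat \<Rightarrow> sg set \<Rightarrow> bool" where
  "is_valid n t r e P =
    (if r = 0 then True
     else if r = 1 then card (signers P 0 e) \<ge> t + 1
     else (let b = (r - 1) mod 2 in
       if e = b then (r = 2 \<and> card (signers P 0 b) \<ge> t + 1) \<or> card (signers P (r - 2) b) \<ge> n - t
       else card (signers P (r - 1) (1 - b)) \<ge> n - t))"

text \<open>The messages of a proof set needed to satisfy the predicate.\<close>
definition needed :: "nat \<Rightarrow> nat \<Rightarrow> sg set \<Rightarrow> sg set" where
  "needed r e P =
    (if r = 0 then {}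
     else if r = 1 then {s \<in> P. \<exists>j. s = AUX j 0 e}
     else (let b = (r - 1) mod 2 in
       if e = b then {s \<in> P. \<exists>j. s = AUX j (r - 2) b \<or> (r = 2 \<and> s = AUX j 0 b)}
       else {s \<in> P. \<exists>j. s = AUX j (r - 1) (1 - b)}))"

text \<open>Program counter:
  Init: before the initial broadcast of AUX[0](v_i);
  L1:   at the top of the loop (step (1));
  W3:   waiting for timer 2r to expire (step (3));
  W5:   waiting for round-r AUX messages from n-t processes (step (5));
  W6:   waiting for timer 2r+1 to expire (step (6)).\<close>
datatype phase = Init | L1 | W3 | W5 | W6

record lst =
  rnd :: nat
  aux :: "sg set"
  rcvd :: "(nat \<times> sg) set"   \<comment> \<open>(sender, signed message) of every well-formed message received\<close>
  started :: "nat set"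
  expired :: "nat set"
  est :: nat
  pc :: phase
  dec :: "nat option"

record gst =
  loc :: "nat \<Rightarrow> lst"
  log :: "msg list"      \<comment> \<open>every message ever sent, in order\<close>
  dlv :: "nat set"       \<comment> \<open>positions in the log already delivered\<close>

definition init_lst :: lst where
  "init_lst = \<lparr>rnd = 0, aux = {}, rcvd = {}, started = {}, expired = {}, est = 0,
               pc = Init, dec = None\<rparr>"

definition init_gst :: gst where
  "init_gst = \<lparr>loc = (\<lambda>_. init_lst), log = [], dlv = {}\<rparr>"

definition bmsgs :: "nat \<Rightarrow> nat \<Rightarrow> sg \<Rightarrow> sg set \<Rightarrow> msg list" where
  "bmsgs n i s P = map (\<lambda>j. (i, j, s, P)) [1..<n+1]"

definition coord :: "nat \<Rightarrow> nat \<Rightarrow> nat \<Rightarrow> bool" where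
  "coord n i r = (i = r mod n)"

definition start_timer :: "nat \<Rightarrow> lst \<Rightarrow> lst" where
  "start_timer k s = (if k \<in> expired s then s else s\<lparr>started := insert k (started s)\<rparr>)"

definition vals :: "nat \<Rightarrow> nat \<Rightarrow> lst \<Rightarrow> nat set" where
  "vals n t s = {v. v \<le> 1 \<and> (\<exists>S \<subseteq> aux s. is_valid n t (rnd s) v S)}"

definition est_ok :: "nat \<Rightarrow> nat \<Rightarrow> lst \<Rightarrow> nat \<Rightarrow> bool" where
  "est_ok n t s e =
    (let c = rnd s mod n; bv = (rnd s + 1) mod 2 in
     if \<exists>p. (c, AUX c (rnd s) p) \<in> rcvd s \<and> p \<in> vals n t s
     then (c, AUX c (rnd s) e) \<in> rcvd s \<and> e \<in> vals n t s
     else if bv \<in> vals n t s then e = bv else e = 1 - bv)"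

definition proofs_ok :: "nat \<Rightarrow> nat \<Rightarrow> lst \<Rightarrow> nat \<Rightarrow> sg set \<Rightarrow> bool" where
  "proofs_ok n t s e P =
    (P \<subseteq> aux s \<and> ((\<exists>S \<subseteq> aux s. is_valid n t (rnd s) e S) \<longrightarrow> is_valid n t (rnd s) e P))"

definition maybe_bcast :: "bool \<Rightarrow> nat \<Rightarrow> nat \<Rightarrow> nat \<Rightarrow> lst \<Rightarrow> msg list \<Rightarrow> lst \<Rightarrow> msg list \<Rightarrow> bool" where
  "maybe_bcast doit n t i s L s' L' =
    ((\<not> doit \<and> s' = s \<and> L' = L) \<or>
     (doit \<and> (\<exists>e P. est_ok n t s e \<and> proofs_ok n t s e P \<and> s' = s\<lparr>est := e\<rparr> \<and>
                    L' = L @ bmsgs n i (AUX i (rnd s) e) P)))"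

definition expire_upto :: "nat \<Rightarrow> lst \<Rightarrow> lst" where
  "expire_upto t s = s\<lparr>expired := expired s \<union>
      {k. \<exists>\<rho>. k \<le> 2 * \<rho> \<and> card {j. \<exists>v. AUX j \<rho> v \<in> aux s} \<ge> t + 1}\<rparr>"

definition receive :: "nat \<Rightarrow> nat \<Rightarrow> nat \<Rightarrow> sg \<Rightarrow> sg set \<Rightarrow> lst \<Rightarrow> lst" where
  "receive n t src m P s =
    (if sval m \<le> 1 \<and> signer m \<in> {1..n} \<and> finite P then
       (let s1 = s\<lparr>rcvd := insert (src, m) (rcvd s)\<rparr>;
            s2 = (if is_valid n t (srnd m) (sval m) P
                  then s1\<lparr>aux := aux s1 \<union> {m} \<union> needed (srnd m) (sval m) P\<rparr> else s1)
        in expire_upto t s2)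
     else s)"

text \<open>Signed messages known to the Byzantine coalition F: those contained in
  messages sent to a faulty process.\<close>
definition adv_known :: "nat set \<Rightarrow> gst \<Rightarrow> sg set" where
  "adv_known F g = (\<Union>(src, dst, m, P) \<in> set (log g). if dst \<in> F then insert m P else {})"

definition sigs_in :: "gst \<Rightarrow> sg set" where
  "sigs_in g = (\<Union>(src, dst, m, P) \<in> set (log g). insert m P)"

definition setloc :: "gst \<Rightarrow> nat \<Rightarrow> lst \<Rightarrow> gst" where
  "setloc g i s = g\<lparr>loc := (loc g)(i := s)\<rparr>"

inductive step :: "nat \<Rightarrow> nat \<Rightarrow> nat set \<Rightarrow> (nat \<Rightarrow> nat) \<Rightarrow> gst \<Rightarrow> gst \<Rightarrow> bool"
  for n :: nat and t :: nat and F :: "nat set" and vin :: "nat \<Rightarrow> nat" where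
  init: "\<lbrakk> i \<in> {1..n} - F; pc (loc g i) = Init \<rbrakk> \<Longrightarrow>
     step n t F vin g (g\<lparr>loc := (loc g)(i := (loc g i)\<lparr>pc := L1\<rparr>),
                          log := log g @ bmsgs n i (AUX i 0 (vin i)) {}\<rparr>)"
| loop: "\<lbrakk> i \<in> {1..n} - F; pc (loc g i) = L1;
           s1 = (loc g i)\<lparr>rnd := Suc (rnd (loc g i))\<rparr>;
           maybe_bcast (coord n i (rnd s1)) n t i s1 (log g) s2 L' \<rbrakk> \<Longrightarrow>
     step n t F vin g (g\<lparr>loc := (loc g)(i := (start_timer (2 * rnd s1) s2)\<lparr>pc := W3\<rparr>),
                          log := L'\<rparr>)"
| w3: "\<lbrakk> i \<in> {1..n} - F; pc (loc g i) = W3; 2 * rnd (loc g i) \<in> expired (loc g i);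
         maybe_bcast (\<not> coord n i (rnd (loc g i))) n t i (loc g i) (log g) s2 L' \<rbrakk> \<Longrightarrow>
     step n t F vin g (g\<lparr>loc := (loc g)(i := s2\<lparr>pc := W5\<rparr>), log := L'\<rparr>)"
| w5: "\<lbrakk> i \<in> {1..n} - F; pc (loc g i) = W5;
         card {j. \<exists>v. AUX j (rnd (loc g i)) v \<in> aux (loc g i)} \<ge> n - t \<rbrakk> \<Longrightarrow>
     step n t F vin g (setloc g i ((start_timer (2 * rnd (loc g i) + 1) (loc g i))\<lparr>pc := W6\<rparr>))"
| w6: "\<lbrakk> i \<in> {1..n} - F; pc (loc g i) = W6; s = loc g i;
         2 * rnd s + 1 \<in> expired s \<rbrakk> \<Longrightarrow>
     step n t F vin g (setloc g i (s\<lparr>dec := (if card (signers (aux s) (rnd s) (rnd s mod 2)) \<ge> n - t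
                                                \<and> dec s = None
                                              then Some (rnd s mod 2) else dec s),
                                       pc := L1\<rparr>))"
| timer: "\<lbrakk> i \<in> {1..n} - F; k \<in> started (loc g i) \<rbrakk> \<Longrightarrow>
     step n t F vin g (setloc g i ((loc g i)\<lparr>expired := insert k (expired (loc g i))\<rparr>))"
| deliver: "\<lbrakk> i \<in> {1..n} - F; k < length (log g); k \<notin> dlv g; log g ! k = (src, i, m, P) \<rbrakk> \<Longrightarrow>
     step n t F vin g ((setloc g i (receive n t src m P (loc g i)))\<lparr>dlv := insert k (dlv g)\<rparr>)"
| byz: "\<lbrakk> src \<in> F; dst \<in> {1..n}; finite P;
         \<forall>s \<in> insert m P. signer s \<in> {1..n} \<and> (signer s \<in> F \<or> s \<in> adv_known F g) \<rbrakk> \<Longrightarrow>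
     step n t F vin g (g\<lparr>log := log g @ [(src, dst, m, P)]\<rparr>)"

end

theory Submission
  imports Defs
begin

definition sig_of :: "msg list \<Rightarrow> sg set" where
  "sig_of L = (\<Union>(src, dst, m, P) \<in> set L. insert m P)"

lemma sigs_in_eq: "sigs_in g = sig_of (log g)"
  by (simp add: sigs_in_def sig_of_def)

lemma sig_of_append[simp]: "sig_of (L @ M) = sig_of L \<union> sig_of M"
  by (auto simp: sig_of_def)

lemma sig_of_bmsgs: "sig_of (bmsgs n i m P) \<subseteq> insert m P"
  by (auto simp: sig_of_def bmsgs_def)

lemma sig_of_single[simp]: "sig_of [(a, b, m, P)] = insert m P"
  by (simp add: sig_of_def)

lemma mb:
  assumes "maybe_bcast doit n t i s L s' L'"
  shows "rnd s' = rnd s \<and> pc s' = pc s \<and> aux s' = aux s \<and>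
         (\<not> doit \<longrightarrow> L' = L) \<and>
         (doit \<longrightarrow> (\<exists>e P. P \<subseteq> aux s \<and> L' = L @ bmsgs n i (AUX i (rnd s) e) P))"
  using assms unfolding maybe_bcast_def proofs_ok_def by auto

lemma st[simp]: "rnd (start_timer k s) = rnd s" "pc (start_timer k s) = pc s"
  "aux (start_timer k s) = aux s"
  by (auto simp: start_timer_def)

lemma rcv[simp]: "rnd (receive n t src m P s) = rnd s" "pc (receive n t src m P s) = pc s"
  by (auto simp: receive_def expire_upto_def Let_def)

lemma rcv_aux: "aux (receive n t src m P s) \<subseteq> aux s \<union> insert m P"
  by (auto simp: receive_def expire_upto_def Let_def needed_def)

definition inv :: "nat \<Rightarrow> nat set \<Rightarrow> gst \<Rightarrow> bool" where
  "inv n F g =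
   ((\<forall>s\<in>sigs_in g. signer s \<in> {1..n}) \<and>
    (\<forall>i. aux (loc g i) \<subseteq> sigs_in g) \<and>
    (\<forall>i\<in>{1..n}-F. \<forall>r v. AUX i r v \<in> sigs_in g \<longrightarrow>
        pc (loc g i) \<noteq> Init \<and> r \<le> rnd (loc g i) \<and>
        (pc (loc g i) = W3 \<and> \<not> coord n i (rnd (loc g i)) \<longrightarrow> r < rnd (loc g i))) \<and>
    (\<forall>i\<in>{1..n}-F. \<forall>r v v'. AUX i r v \<in> sigs_in g \<longrightarrow> AUX i r v' \<in> sigs_in g \<longrightarrow> v = v'))"

lemma inv_init: "inv n F init_gst"
  by (simp add: inv_def init_gst_def sigs_in_def init_lst_def)

lemma inv_loc:
  assumes I: "inv n F g"
    and lg: "log g' = log g"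
    and oth: "\<And>j. j \<noteq> i \<Longrightarrow> loc g' j = loc g j"
    and r: "rnd (loc g' i) = rnd (loc g i)"
    and p: "pc (loc g' i) = pc (loc g i) \<or> (pc (loc g i) \<noteq> Init \<and> pc (loc g' i) \<noteq> Init \<and> pc (loc g' i) \<noteq> W3)"
    and a: "aux (loc g' i) \<subseteq> sigs_in g"
  shows "inv n F g'"
proof -
  have S: "sigs_in g' = sigs_in g" using lg by (simp add: sigs_in_eq)
  have P1: "\<forall>s\<in>sigs_in g'. signer s \<in> {1..n}" using I S unfolding inv_def by simp
  have P2: "\<forall>j. aux (loc g' j) \<subseteq> sigs_in g'"
  proof
    fix j show "aux (loc g' j) \<subseteq> sigs_in g'"
      using I S a oth[of j] unfolding inv_def by (cases "j = i") auto
  qed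
  have P3: "\<forall>j\<in>{1..n}-F. \<forall>r v. AUX j r v \<in> sigs_in g' \<longrightarrow>
        pc (loc g' j) \<noteq> Init \<and> r \<le> rnd (loc g' j) \<and>
        (pc (loc g' j) = W3 \<and> \<not> coord n j (rnd (loc g' j)) \<longrightarrow> r < rnd (loc g' j))"
  proof (intro ballI allI impI)
    fix j r v assume j: "j \<in> {1..n}-F" and m: "AUX j r v \<in> sigs_in g'"
    have h: "pc (loc g j) \<noteq> Init \<and> r \<le> rnd (loc g j) \<and>
        (pc (loc g j) = W3 \<and> \<not> coord n j (rnd (loc g j)) \<longrightarrow> r < rnd (loc g j))"
      using I j m S unfolding inv_def by blast
    show "pc (loc g' j) \<noteq> Init \<and> r \<le> rnd (loc g' j) \<and>
        (pc (loc g' j) = W3 \<and> \<not> coord n j (rnd (loc g' j)) \<longrightarrow> r < rnd (loc g' j))"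
    proof (cases "j = i")
      case True then show ?thesis using h r p by auto
    next
      case False then show ?thesis using h oth[of j] by simp
    qed
  qed
  have P4: "\<forall>j\<in>{1..n}-F. \<forall>r v v'. AUX j r v \<in> sigs_in g' \<longrightarrow> AUX j r v' \<in> sigs_in g' \<longrightarrow> v = v'"
    using I S unfolding inv_def by simp
  show ?thesis unfolding inv_def using P1 P2 P3 P4 by blast
qed

lemma inv_bc:
  assumes I: "inv n F g"
    and i: "i \<in> {1..n} - F"
    and S1: "sigs_in g \<subseteq> sigs_in g'"
    and S2: "sigs_in g' \<subseteq> sigs_in g \<union> (if sent then {AUX i r0 e} else {}) \<union> aux (loc g i)"
    and fresh: "sent \<Longrightarrow> \<forall>v. AUX i r0 v \<notin> sigs_in g"
    and oth: "\<And>j. j \<noteq> i \<Longrightarrow> loc g' j = loc g j"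
    and ax: "aux (loc g' i) = aux (loc g i)"
    and new: "sent \<Longrightarrow> pc (loc g' i) \<noteq> Init \<and> r0 \<le> rnd (loc g' i) \<and>
         (pc (loc g' i) = W3 \<and> \<not> coord n i (rnd (loc g' i)) \<longrightarrow> r0 < rnd (loc g' i))"
    and old: "\<And>r v. AUX i r v \<in> sigs_in g \<Longrightarrow> pc (loc g' i) \<noteq> Init \<and> r \<le> rnd (loc g' i) \<and>
         (pc (loc g' i) = W3 \<and> \<not> coord n i (rnd (loc g' i)) \<longrightarrow> r < rnd (loc g' i))"
  shows "inv n F g'"
proof -
  have axi: "aux (loc g i) \<subseteq> sigs_in g" using I unfolding inv_def by blast
  have S: "sigs_in g' \<subseteq> sigs_in g \<union> (if sent then {AUX i r0 e} else {})"
    using S2 axi by auto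
  have P1: "\<forall>s\<in>sigs_in g'. signer s \<in> {1..n}"
  proof
    fix s assume "s \<in> sigs_in g'"
    then have "s \<in> sigs_in g \<or> s = AUX i r0 e" using S by (auto split: if_splits)
    then show "signer s \<in> {1..n}" using I i unfolding inv_def by auto
  qed
  have P2: "\<forall>j. aux (loc g' j) \<subseteq> sigs_in g'"
  proof
    fix j show "aux (loc g' j) \<subseteq> sigs_in g'"
    proof (cases "j = i")
      case True then show ?thesis using ax axi S1 by simp
    next
      case False then have "aux (loc g j) \<subseteq> sigs_in g" using I unfolding inv_def by blast
      then show ?thesis using oth[OF False] S1 by simp
    qed
  qed
  have P3: "\<forall>j\<in>{1..n}-F. \<forall>r v. AUX j r v \<in> sigs_in g' \<longrightarrow>
        pc (loc g' j) \<noteq> Init \<and> r \<le> rnd (loc g' j) \<and>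
        (pc (loc g' j) = W3 \<and> \<not> coord n j (rnd (loc g' j)) \<longrightarrow> r < rnd (loc g' j))"
  proof (intro ballI allI impI)
    fix j r v assume j: "j \<in> {1..n}-F" and m: "AUX j r v \<in> sigs_in g'"
    then have "AUX j r v \<in> sigs_in g \<or> (sent \<and> j = i \<and> r = r0)" using S by (auto split: if_splits)
    then show "pc (loc g' j) \<noteq> Init \<and> r \<le> rnd (loc g' j) \<and>
        (pc (loc g' j) = W3 \<and> \<not> coord n j (rnd (loc g' j)) \<longrightarrow> r < rnd (loc g' j))"
    proof
      assume h: "AUX j r v \<in> sigs_in g"
      show ?thesis
      proof (cases "j = i")
        case True then show ?thesis using old h by simp
      next
        case False
        have "pc (loc g j) \<noteq> Init \<and> r \<le> rnd (loc g j) \<and>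
          (pc (loc g j) = W3 \<and> \<not> coord n j (rnd (loc g j)) \<longrightarrow> r < rnd (loc g j))"
          using I j h unfolding inv_def by blast
        then show ?thesis using oth[OF False] by simp
      qed
    next
      assume "sent \<and> j = i \<and> r = r0" then show ?thesis using new by simp
    qed
  qed
  have P4: "\<forall>j\<in>{1..n}-F. \<forall>r v v'. AUX j r v \<in> sigs_in g' \<longrightarrow> AUX j r v' \<in> sigs_in g' \<longrightarrow> v = v'"
  proof (intro ballI allI impI)
    fix j r v v' assume j: "j \<in> {1..n}-F" and m: "AUX j r v \<in> sigs_in g'" and m': "AUX j r v' \<in> sigs_in g'"
    have o: "AUX j r v \<in> sigs_in g \<or> (sent \<and> j = i \<and> r = r0 \<and> v = e)" using S m by (auto split: if_splits)
    have o': "AUX j r v' \<in> sigs_in g \<or> (sent \<and> j = i \<and> r = r0 \<and> v' = e)" using S m' by (auto split: if_splits)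
    show "v = v'" using o o' fresh I j unfolding inv_def by blast
  qed
  show ?thesis unfolding inv_def using P1 P2 P3 P4 by blast
qed

lemma inv_step:
  assumes "step n t F vin g g'" "inv n F g"
  shows "inv n F g'"
  using assms(1)
proof cases
  case (init i)
  have I: "inv n F g" by fact
  have nm: "\<And>r v. AUX i r v \<notin> sigs_in g" using I init unfolding inv_def by blast
  show ?thesis
  proof (rule inv_bc[OF I, of i _ True 0 "vin i"])
    show "sigs_in g \<subseteq> sigs_in g'" using init by (auto simp: sigs_in_eq)
    show "sigs_in g' \<subseteq> sigs_in g \<union> (if True then {AUX i 0 (vin i)} else {}) \<union> aux (loc g i)"
      using init sig_of_bmsgs[of n i "AUX i 0 (vin i)" "{}"] by (auto simp: sigs_in_eq)
  qed (use init nm in auto)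
next
  case (loop i s1 s2 L')
  have I: "inv n F g" by fact
  have M: "rnd s2 = rnd s1 \<and> pc s2 = pc s1 \<and> aux s2 = aux s1 \<and>
         (\<not> coord n i (rnd s1) \<longrightarrow> L' = log g) \<and>
         (coord n i (rnd s1) \<longrightarrow> (\<exists>e P. P \<subseteq> aux s1 \<and> L' = log g @ bmsgs n i (AUX i (rnd s1) e) P))"
    using mb[OF loop(5)] .
  have old: "\<And>r v. AUX i r v \<in> sigs_in g \<Longrightarrow> pc (loc g i) \<noteq> Init \<and> r \<le> rnd (loc g i)"
    using I loop unfolding inv_def by blast
  have L: "loc g' i = (start_timer (2 * rnd s1) s2)\<lparr>pc := W3\<rparr>" "\<And>j. j \<noteq> i \<Longrightarrow> loc g' j = loc g j"
    using loop by auto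
  have R: "rnd (loc g' i) = Suc (rnd (loc g i))" "pc (loc g' i) = W3" "aux (loc g' i) = aux (loc g i)"
    using L M loop by auto
  show ?thesis
  proof (cases "coord n i (rnd s1)")
    case True
    then obtain e P where eP: "P \<subseteq> aux s1" "L' = log g @ bmsgs n i (AUX i (rnd s1) e) P" using M by blast
    show ?thesis
    proof (rule inv_bc[OF I, of i _ True "rnd s1" e])
      show "sigs_in g \<subseteq> sigs_in g'" using loop eP by (auto simp: sigs_in_eq)
      show "sigs_in g' \<subseteq> sigs_in g \<union> (if True then {AUX i (rnd s1) e} else {}) \<union> aux (loc g i)"
        using loop eP sig_of_bmsgs[of n i "AUX i (rnd s1) e" P] by (auto simp: sigs_in_eq)
      show "True \<Longrightarrow> \<forall>v. AUX i (rnd s1) v \<notin> sigs_in g" using old loop by fastforce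
      show "\<And>j. j \<noteq> i \<Longrightarrow> loc g' j = loc g j" by (rule L(2))
      show "aux (loc g' i) = aux (loc g i)" by (rule R(3))
      show "True \<Longrightarrow> pc (loc g' i) \<noteq> Init \<and> rnd s1 \<le> rnd (loc g' i) \<and>
         (pc (loc g' i) = W3 \<and> \<not> coord n i (rnd (loc g' i)) \<longrightarrow> rnd s1 < rnd (loc g' i))"
        using R loop(4) \<open>coord n i (rnd s1)\<close> by simp
      show "\<And>r v. AUX i r v \<in> sigs_in g \<Longrightarrow> pc (loc g' i) \<noteq> Init \<and> r \<le> rnd (loc g' i) \<and>
         (pc (loc g' i) = W3 \<and> \<not> coord n i (rnd (loc g' i)) \<longrightarrow> r < rnd (loc g' i))"
        using R old by force
    qed (use loop in simp)
  next
    case False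
    show ?thesis
    proof (rule inv_bc[OF I, of i _ False 0 0])
      show "sigs_in g \<subseteq> sigs_in g'" using loop M False by (auto simp: sigs_in_eq)
      show "sigs_in g' \<subseteq> sigs_in g \<union> (if False then {AUX i 0 0} else {}) \<union> aux (loc g i)"
        using loop M False by (auto simp: sigs_in_eq)
      show "\<And>j. j \<noteq> i \<Longrightarrow> loc g' j = loc g j" by (rule L(2))
      show "aux (loc g' i) = aux (loc g i)" by (rule R(3))
      show "\<And>r v. AUX i r v \<in> sigs_in g \<Longrightarrow> pc (loc g' i) \<noteq> Init \<and> r \<le> rnd (loc g' i) \<and>
         (pc (loc g' i) = W3 \<and> \<not> coord n i (rnd (loc g' i)) \<longrightarrow> r < rnd (loc g' i))"
        using R old by force
    qed (use loop in simp_all)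
  qed
next
  case (w3 i s2 L')
  have I: "inv n F g" by fact
  have M: "rnd s2 = rnd (loc g i) \<and> pc s2 = pc (loc g i) \<and> aux s2 = aux (loc g i) \<and>
         (\<not> \<not> coord n i (rnd (loc g i)) \<longrightarrow> L' = log g) \<and>
         (\<not> coord n i (rnd (loc g i)) \<longrightarrow> (\<exists>e P. P \<subseteq> aux (loc g i) \<and> L' = log g @ bmsgs n i (AUX i (rnd (loc g i)) e) P))"
    using mb[OF w3(5)] .
  have old: "\<And>r v. AUX i r v \<in> sigs_in g \<Longrightarrow> pc (loc g i) \<noteq> Init \<and> r \<le> rnd (loc g i) \<and>
        (\<not> coord n i (rnd (loc g i)) \<longrightarrow> r < rnd (loc g i))"
    using I w3 unfolding inv_def by blast
  have L: "loc g' i = s2\<lparr>pc := W5\<rparr>" "\<And>j. j \<noteq> i \<Longrightarrow> loc g' j = loc g j"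
    using w3 by auto
  have R: "rnd (loc g' i) = rnd (loc g i)" "pc (loc g' i) = W5" "aux (loc g' i) = aux (loc g i)"
    using L M w3 by auto
  show ?thesis
  proof (cases "coord n i (rnd (loc g i))")
    case False
    then obtain e P where eP: "P \<subseteq> aux (loc g i)" "L' = log g @ bmsgs n i (AUX i (rnd (loc g i)) e) P" using M by blast
    show ?thesis
    proof (rule inv_bc[OF I, of i _ True "rnd (loc g i)" e])
      show "sigs_in g \<subseteq> sigs_in g'" using w3 eP by (auto simp: sigs_in_eq)
      show "sigs_in g' \<subseteq> sigs_in g \<union> (if True then {AUX i (rnd (loc g i)) e} else {}) \<union> aux (loc g i)"
        using w3 eP sig_of_bmsgs[of n i "AUX i (rnd (loc g i)) e" P] by (auto simp: sigs_in_eq)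
      show "True \<Longrightarrow> \<forall>v. AUX i (rnd (loc g i)) v \<notin> sigs_in g" using old False by blast
      show "\<And>j. j \<noteq> i \<Longrightarrow> loc g' j = loc g j" by (rule L(2))
      show "aux (loc g' i) = aux (loc g i)" by (rule R(3))
      show "True \<Longrightarrow> pc (loc g' i) \<noteq> Init \<and> rnd (loc g i) \<le> rnd (loc g' i) \<and>
         (pc (loc g' i) = W3 \<and> \<not> coord n i (rnd (loc g' i)) \<longrightarrow> rnd (loc g i) < rnd (loc g' i))"
        using R by simp
      show "\<And>r v. AUX i r v \<in> sigs_in g \<Longrightarrow> pc (loc g' i) \<noteq> Init \<and> r \<le> rnd (loc g' i) \<and>
         (pc (loc g' i) = W3 \<and> \<not> coord n i (rnd (loc g' i)) \<longrightarrow> r < rnd (loc g' i))"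
        using R old by force
    qed (use w3 in simp)
  next
    case True
    show ?thesis
    proof (rule inv_bc[OF I, of i _ False 0 0])
      show "sigs_in g \<subseteq> sigs_in g'" using w3 M True by (auto simp: sigs_in_eq)
      show "sigs_in g' \<subseteq> sigs_in g \<union> (if False then {AUX i 0 0} else {}) \<union> aux (loc g i)"
        using w3 M True by (auto simp: sigs_in_eq)
      show "\<And>j. j \<noteq> i \<Longrightarrow> loc g' j = loc g j" by (rule L(2))
      show "aux (loc g' i) = aux (loc g i)" by (rule R(3))
      show "\<And>r v. AUX i r v \<in> sigs_in g \<Longrightarrow> pc (loc g' i) \<noteq> Init \<and> r \<le> rnd (loc g' i) \<and>
         (pc (loc g' i) = W3 \<and> \<not> coord n i (rnd (loc g' i)) \<longrightarrow> r < rnd (loc g' i))"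
        using R old by force
    qed (use w3 in simp_all)
  qed
next
  case (w5 i)
  then show ?thesis 
    by (intro inv_loc[OF assms(2), of _ i]) (auto simp: setloc_def start_timer_def assms(2)[unfolded inv_def])
next
  case (w6 i s)
  then show ?thesis
    by (intro inv_loc[OF assms(2), of _ i]) (auto simp: setloc_def assms(2)[unfolded inv_def])
next
  case (timer i k)
  then show ?thesis
    by (intro inv_loc[OF assms(2), of _ i]) (auto simp: setloc_def assms(2)[unfolded inv_def])
next
  case (deliver i k src m P)
  have "(src, i, m, P) \<in> set (log g)" using deliver by (metis nth_mem)
  then have "insert m P \<subseteq> sigs_in g" unfolding sigs_in_def by blast
  moreover have "aux (loc g i) \<subseteq> sigs_in g" using assms(2) unfolding inv_def by blast
  ultimately have A: "aux (receive n t src m P (loc g i)) \<subseteq> sigs_in g"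
    using rcv_aux[of n t src m P "loc g i"] by blast
  show ?thesis using deliver A
    by (intro inv_loc[OF assms(2), of _ i]) (auto simp: setloc_def assms(2)[unfolded inv_def])
next
  case (byz src dst P m)
  have I: "inv n F g" by fact
  have ak: "adv_known F g \<subseteq> sigs_in g" unfolding adv_known_def sigs_in_def
    by (auto split: if_splits)
  have S: "sigs_in g' = sigs_in g \<union> insert m P" using byz by (simp add: sigs_in_eq)
  have P1: "\<forall>s\<in>sigs_in g'. signer s \<in> {1..n}" using I S byz(5) unfolding inv_def by auto
  have corr: "\<And>j r v. j \<notin> F \<Longrightarrow> AUX j r v \<in> sigs_in g' \<Longrightarrow> AUX j r v \<in> sigs_in g"
    using S byz(5) ak by fastforce
  have lc: "loc g' = loc g" using byz by simp
  show ?thesis unfolding inv_def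
  proof (intro conjI)
    show "\<forall>s\<in>sigs_in g'. signer s \<in> {1..n}" by fact
    show "\<forall>i. aux (loc g' i) \<subseteq> sigs_in g'" using I unfolding inv_def lc S by blast
    show "\<forall>i\<in>{1..n} - F. \<forall>r v. AUX i r v \<in> sigs_in g' \<longrightarrow> pc (loc g' i) \<noteq> Init \<and>
      r \<le> rnd (loc g' i) \<and> (pc (loc g' i) = W3 \<and> \<not> coord n i (rnd (loc g' i)) \<longrightarrow> r < rnd (loc g' i))"
      using I corr unfolding inv_def lc by blast
    show "\<forall>i\<in>{1..n} - F. \<forall>r v v'. AUX i r v \<in> sigs_in g' \<longrightarrow> AUX i r v' \<in> sigs_in g' \<longrightarrow> v = v'"
      using I corr unfolding inv_def by blast
  qed
qed

theorem lemma1: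
  fixes n t :: nat and F :: "nat set" and vin :: "nat \<Rightarrow> nat" and g :: gst
  assumes "3 * t < n"
    and "F \<subseteq> {1..n}" and "card F \<le> t"
    and "\<forall>i \<in> {1..n} - F. vin i \<le> 1"
    and "(step n t F vin)\<^sup>*\<^sup>* init_gst g"
  shows "\<forall>r. card {b. b \<le> 1 \<and> card (signers (sigs_in g) r b) \<ge> n - t} \<le> 1"
proof
  fix r
  have I: "inv n F g" using assms(5)
    by (induction rule: rtranclp_induct) (auto intro: inv_init inv_step)
  define S0 where "S0 = signers (sigs_in g) r 0"
  define S1 where "S1 = signers (sigs_in g) r 1"
  have sub: "S0 \<subseteq> {1..n}" "S1 \<subseteq> {1..n}" using I
    by (auto simp: inv_def S0_def S1_def signers_def)
  have int: "S0 \<inter> S1 \<subseteq> F"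
  proof
    fix j assume "j \<in> S0 \<inter> S1"
    then have "AUX j r 0 \<in> sigs_in g" "AUX j r 1 \<in> sigs_in g" "j \<in> {1..n}"
      using sub by (auto simp: S0_def S1_def signers_def)
    then show "j \<in> F" using I unfolding inv_def by fastforce
  qed
  have fin: "finite S0" "finite S1" using sub finite_subset by blast+
  have "card (S0 \<union> S1) \<le> n" using sub card_mono[of "{1..n}" "S0 \<union> S1"] by auto
  moreover have "card (S0 \<inter> S1) \<le> t"
    using int card_mono[OF finite_subset[OF assms(2)] int] assms(3) by simp
  moreover have "card S0 + card S1 = card (S0 \<union> S1) + card (S0 \<inter> S1)"
    using card_Un_Int[OF fin] .
  ultimately have "\<not> (card S0 \<ge> n - t \<and> card S1 \<ge> n - t)" using assms(1) by linarith
  then have "\<not> card S0 \<ge> n - t \<or> \<not> card S1 \<ge> n - t" by blast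
  then have "{b. b \<le> 1 \<and> card (signers (sigs_in g) r b) \<ge> n - t} \<subseteq> {1} \<or>
             {b. b \<le> 1 \<and> card (signers (sigs_in g) r b) \<ge> n - t} \<subseteq> {0}"
  proof
    assume "\<not> card S0 \<ge> n - t"
    then have "{b. b \<le> 1 \<and> card (signers (sigs_in g) r b) \<ge> n - t} \<subseteq> {1}"
      unfolding S0_def using le_Suc_eq by fastforce
    then show ?thesis ..
  next
    assume "\<not> card S1 \<ge> n - t"
    then have "{b. b \<le> 1 \<and> card (signers (sigs_in g) r b) \<ge> n - t} \<subseteq> {0}"
      unfolding S1_def using le_Suc_eq by fastforce
    then show ?thesis ..
  qed
  then show "card {b. b \<le> 1 \<and> card (signers (sigs_in g) r b) \<ge> n - t} \<le> 1"
    using card_mono[of "{0::nat}"] card_mono[of "{1::nat}"] by fastforce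
qed

end
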